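(* Fix $0\le t<1$. (i) If $A^*>0$, then $$\lim_{x\downarrow A^*\sqrt{1-t}}\frac{\partial}{\partial x}W^*(t,x)=\lim_{x\uparrow A^*\sqrt{1-t}}\frac{\partial}{\partial x}h(t,x),\qquad \lim_{x\uparrow -A^*\sqrt{1-t}}\frac{\partial}{\partial x}W^*(t,x)=\lim_{x\downarrow -A^*\sqrt{1-t}}\frac{\partial}{\partial x}h(t,x).$$ (ii) If $A^*=0$, then $$\lim_{x\downarrow0}\frac{\partial}{\partial x}W^*(t,x)<\lim_{x\uparrow0}\frac{\partial}{\partial x}W^*(t,x).$$ Here $$W^*(t,x)=\begin{cases}(1-t)^{q/2}G_q(|x|/\sqrt{1-t})\,w(A^* ), & |x|>A^*\sqrt{1-t},\\ h(t,x), & |x|\le A^*\sqrt{1-t}.\end{cases}$$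
   Context: $q>0$. $F_q(y):=\int_0^\infty u^{q-1}e^{yu-u^2/2}\,\mathrm{d}u$ and $G_q(y):=F_q(-y)$. $D^*>0$ is the unique positive root of $q-D(F_q+G_q)'(D)/(F_q+G_q)(D)=0$. $\overline{U}(t,x)=(1-t)^{q/2}(D^* )^q(F_q+G_q)(x/\sqrt{1-t})/(F_q+G_q)(D^* )$ if $|x|<D^*\sqrt{1-t}$, and $|x|^q$ otherwise. $h(t,x)=\overline{U}(t,x)-|x|^q$ if $|x|<D^*\sqrt{1-t}$, and $0$ otherwise. $w(A):=\frac{1}{G_q(A)}[(D^* )^q(F_q+G_q)(A)/(F_q+G_q)(D^* )-A^q]$ for $0\le A\le D^*$. $A^*$ is the unique maximizer of $w$ over $[0,D^*]$. *)

theory Defs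
  imports "HOL-Analysis.Analysis"
begin

definition Fq :: "real \<Rightarrow> real \<Rightarrow> real" where
  "Fq q y = (LBINT u:{0<..}. u powr (q - 1) * exp (y * u - u\<^sup>2 / 2))"

definition Gq :: "real \<Rightarrow> real \<Rightarrow> real" where
  "Gq q y = Fq q (- y)"

definition Dstar :: "real \<Rightarrow> real" where
  "Dstar q = (THE D. D > 0 \<and>
      q - D * deriv (\<lambda>y. Fq q y + Gq q y) D / (Fq q D + Gq q D) = 0)"

definition Ubar :: "real \<Rightarrow> real \<Rightarrow> real \<Rightarrow> real" where
  "Ubar q t x = (if \<bar>x\<bar> < Dstar q * sqrt (1 - t)
     then (1 - t) powr (q / 2) * (Dstar q) powr q
          * (Fq q (x / sqrt (1 - t)) + Gq q (x / sqrt (1 - t)))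
          / (Fq q (Dstar q) + Gq q (Dstar q))
     else \<bar>x\<bar> powr q)"

definition hfun :: "real \<Rightarrow> real \<Rightarrow> real \<Rightarrow> real" where
  "hfun q t x = (if \<bar>x\<bar> < Dstar q * sqrt (1 - t) then Ubar q t x - \<bar>x\<bar> powr q else 0)"

definition wfun :: "real \<Rightarrow> real \<Rightarrow> real" where
  "wfun q A = (1 / Gq q A) * ((Dstar q) powr q * (Fq q A + Gq q A)
                 / (Fq q (Dstar q) + Gq q (Dstar q)) - A powr q)"

definition Astar :: "real \<Rightarrow> real" where
  "Astar q = (THE A. A \<in> {0..Dstar q} \<and> (\<forall>B\<in>{0..Dstar q}. wfun q B \<le> wfun q A))"

definition Wstar :: "real \<Rightarrow> real \<Rightarrow> real \<Rightarrow> real" where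
  "Wstar q t x = (if \<bar>x\<bar> > Astar q * sqrt (1 - t)
     then (1 - t) powr (q / 2) * Gq q (\<bar>x\<bar> / sqrt (1 - t)) * wfun q (Astar q)
     else hfun q t x)"

end

theory Submission
  imports Defs "HOL-Real_Asymp.Real_Asymp"
begin


definition K :: "real \<Rightarrow> real \<Rightarrow> real \<Rightarrow> real" where
  "K a y u = u powr a * exp (y * u - u\<^sup>2 / 2)"

lemma gamma_integrable:
  assumes "s > (0::real)"
  shows "integrable lborel (\<lambda>t. indicator {0..} t * t powr (s - 1) / exp t)"
proof (rule integrableI_nonneg)
  show "(\<lambda>t. indicator {0..} t * t powr (s - 1) / exp t) \<in> borel_measurable lborel" by measurable
  show "AE x in lborel. 0 \<le> indicator {0..} x * x powr (s - 1) / exp x" by (auto simp: indicator_def)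
  have "(\<integral>\<^sup>+ x. ennreal (indicator {0..} x * x powr (s - 1) / exp x) \<partial>lborel) = ennreal (Gamma s)"
    using Gamma_conv_nn_integral_real[OF assms] by simp
  then show "(\<integral>\<^sup>+ x. ennreal (indicator {0..} x * x powr (s - 1) / exp x) \<partial>lborel) < \<infinity>" by simp
qed

lemma K_int:
  assumes "a > -1"
  shows "set_integrable lborel {0<..} (K a y)"
  unfolding set_integrable_def
proof (rule Bochner_Integration.integrable_bound[where f="\<lambda>t. exp ((y+1)\<^sup>2/2) * (indicator {0..} t * t powr (a + 1 - 1) / exp t)"])
  show "integrable lborel (\<lambda>t. exp ((y+1)\<^sup>2/2) * (indicator {0..} t * t powr (a + 1 - 1) / exp t))"
    apply (rule integrable_mult_right) using gamma_integrable[of "a+1"] assms by simp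
  show "(\<lambda>x. indicator {0<..} x *\<^sub>R K a y x) \<in> borel_measurable lborel"
    unfolding K_def by measurable
  show "AE x in lborel. norm (indicator {0<..} x *\<^sub>R K a y x)
      \<le> norm (exp ((y+1)\<^sup>2/2) * (indicator {0..} x * x powr (a + 1 - 1) / exp x))"
  proof (rule AE_I2)
    fix x :: real
    show "norm (indicator {0<..} x *\<^sub>R K a y x)
      \<le> norm (exp ((y+1)\<^sup>2/2) * (indicator {0..} x * x powr (a + 1 - 1) / exp x))"
    proof (cases "x > 0")
      case True
      have e: "y * x - x\<^sup>2 / 2 \<le> (y+1)\<^sup>2/2 + (-x)"
        using sum_squares_ge_zero[of "x - (y+1)" 0] by (simp add: power2_eq_square algebra_simps)
      have "exp (y * x - x\<^sup>2 / 2) \<le> exp ((y+1)\<^sup>2/2) * exp (-x)"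
        using e by (simp add: exp_add[symmetric])
      then have "x powr a * exp (y * x - x\<^sup>2 / 2) \<le> x powr a * (exp ((y+1)\<^sup>2/2) * exp (-x))"
        by (intro mult_left_mono) auto
      then show ?thesis using True by (simp add: K_def indicator_def exp_minus field_simps)
    next
      case False
      then show ?thesis by (simp add: indicator_def)
    qed
  qed
qed


lemma dom_at:
  fixes s :: "real \<Rightarrow> real \<Rightarrow> real" and f w :: "real \<Rightarrow> real"
  assumes ms: "\<And>h. s h \<in> borel_measurable M" and mf: "f \<in> borel_measurable M" and w: "integrable M w"
    and lim: "AE u in M. ((\<lambda>h. s h u) \<longlongrightarrow> f u) (at x)"
    and bd: "eventually (\<lambda>h. AE u in M. norm (s h u) \<le> w u) (at x)"
  shows "((\<lambda>h. integral\<^sup>L M (s h)) \<longlongrightarrow> integral\<^sup>L M f) (at x)"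
  unfolding tendsto_at_iff_sequentially
proof (intro allI impI)
  fix X :: "nat \<Rightarrow> real"
  assume X1: "\<forall>i. X i \<in> UNIV - {x}" and X2: "X \<longlonglongrightarrow> x"
  have XF: "filterlim X (at x) sequentially"
    using X1 X2 by (auto simp: filterlim_at)
  obtain N where N: "\<And>n. N \<le> n \<Longrightarrow> AE u in M. norm (s (X n) u) \<le> w u"
    using filterlim_iff[THEN iffD1, OF XF, rule_format, OF bd] by (auto simp: eventually_sequentially)
  show "((\<lambda>h. integral\<^sup>L M (s h)) \<circ> X) \<longlonglongrightarrow> integral\<^sup>L M f"
    unfolding comp_def
  proof (rule LIMSEQ_offset, rule integral_dominated_convergence)
    show "AE u in M. norm (s (X (n + N)) u) \<le> w u" for n
      by (rule N) auto
    show "AE u in M. (\<lambda>n. s (X (n + N)) u) \<longlonglongrightarrow> f u"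
      using lim
    proof eventually_elim
      fix u assume "((\<lambda>h. s h u) \<longlongrightarrow> f u) (at x)"
      then have "(\<lambda>n. s (X n) u) \<longlonglongrightarrow> f u"
        by (rule filterlim_compose[OF _ XF])
      then show "(\<lambda>n. s (X (n + N)) u) \<longlonglongrightarrow> f u"
        by (rule LIMSEQ_ignore_initial_segment)
    qed
  qed (use ms mf w in auto)
qed

lemma exp_diff_bound: fixes x :: real shows "\<bar>exp x - 1\<bar> \<le> \<bar>x\<bar> * exp \<bar>x\<bar>"
proof (cases "x \<ge> 0")
  case True
  have "exp (-x) \<ge> 1 + (-x)" using exp_ge_add_one_self[of "-x"] by simp
  then have "exp (-x) * exp x \<ge> (1 - x) * exp x" by (intro mult_right_mono) auto
  then have "1 \<ge> (1 - x) * exp x" by (simp add: exp_minus)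
  then show ?thesis using True by (simp add: algebra_simps)
next
  case False
  have "exp x \<ge> 1 + x" by (rule exp_ge_add_one_self)
  moreover have "exp \<bar>x\<bar> \<ge> 1" using False by simp
  moreover have "exp x \<le> 1" using False by simp
  ultimately have "\<bar>exp x - 1\<bar> \<le> \<bar>x\<bar>" using False by (smt (verit))
  also have "\<dots> \<le> \<bar>x\<bar> * exp \<bar>x\<bar>" using \<open>exp \<bar>x\<bar> \<ge> 1\<close> by (simp add: mult_le_cancel_left1)
  finally show ?thesis .
qed


lemma Fq_K: "Fq q y = integral\<^sup>L lborel (\<lambda>u. indicator {0<..} u * K (q-1) y u)"
  unfolding Fq_def set_lebesgue_integral_def K_def by simp

lemma K_intI: "a > -1 \<Longrightarrow> integrable lborel (\<lambda>u. indicator {0<..} u * K a y u)"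
  using K_int[of a y] unfolding set_integrable_def by simp

lemma K_deriv_pt:
  assumes "u > 0"
  shows "((\<lambda>h. (K a (y+h) u - K a y u) / h) \<longlongrightarrow> K (a+1) y u) (at 0)"
proof -
  have "((\<lambda>h. K a (y+h) u) has_real_derivative K (a+1) y u) (at 0)"
    unfolding K_def using assms
    by (auto intro!: derivative_eq_intros simp: powr_add algebra_simps)
  then show ?thesis unfolding DERIV_def by simp
qed

lemma Fq_deriv:
  assumes q: "q > 0"
  shows "(Fq q has_real_derivative Fq (q+1) y) (at y)"
  unfolding DERIV_def
proof -
  let ?s = "\<lambda>h u. indicator {0<..} u * ((K (q-1) (y+h) u - K (q-1) y u) / h)"
  let ?f = "\<lambda>u. indicator {0<..} u * K q y u"
  let ?w = "\<lambda>u. indicator {0<..} u * K q (y+1) u"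
  have eq: "(Fq q (y + h) - Fq q y) / h = integral\<^sup>L lborel (?s h)" for h
  proof -
    have "integral\<^sup>L lborel (?s h) = integral\<^sup>L lborel
        (\<lambda>u. (indicator {0<..} u * K (q-1) (y+h) u - indicator {0<..} u * K (q-1) y u) / h)"
      by (simp add: right_diff_distrib)
    also have "\<dots> = integral\<^sup>L lborel
        (\<lambda>u. indicator {0<..} u * K (q-1) (y+h) u - indicator {0<..} u * K (q-1) y u) / h"
      by (rule integral_divide_zero)
    also have "\<dots> = (integral\<^sup>L lborel (\<lambda>u. indicator {0<..} u * K (q-1) (y+h) u)
        - integral\<^sup>L lborel (\<lambda>u. indicator {0<..} u * K (q-1) y u)) / h"
      using q by (simp only: Bochner_Integration.integral_diff[OF K_intI K_intI])
    finally show ?thesis unfolding Fq_K by (rule sym)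
  qed
  have "((\<lambda>h. integral\<^sup>L lborel (?s h)) \<longlongrightarrow> integral\<^sup>L lborel ?f) (at 0)"
  proof (rule dom_at[where w="?w"])
    show "?s h \<in> borel_measurable lborel" for h unfolding K_def by measurable
    show "?f \<in> borel_measurable lborel" unfolding K_def by measurable
    show "integrable lborel ?w" using q by (intro K_intI) simp
    show "AE u in lborel. ((\<lambda>h. ?s h u) \<longlongrightarrow> ?f u) (at 0)"
    proof (rule AE_I2)
      fix u :: real
      show "((\<lambda>h. ?s h u) \<longlongrightarrow> ?f u) (at 0)"
      proof (cases "u > 0")
        case True
        then show ?thesis using K_deriv_pt[OF True, of "q-1" y] by simp
      qed simp
    qed
    have "eventually (\<lambda>h. \<bar>h\<bar> < 1) (at (0::real))"
      unfolding eventually_at by (intro exI[of _ 1]) (auto simp: dist_real_def)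
    then show "eventually (\<lambda>h. AE u in lborel. norm (?s h u) \<le> ?w u) (at 0)"
    proof eventually_elim
      case (elim h)
      show ?case
      proof (rule AE_I2)
        fix u :: real
        show "norm (?s h u) \<le> ?w u"
        proof (cases "u > 0 \<and> h \<noteq> 0")
          case True
          then have u: "u > 0" and h: "h \<noteq> 0" by auto
          have kd: "K (q-1) (y+h) u - K (q-1) y u = K (q-1) y u * (exp (h*u) - 1)"
          proof -
            have "exp ((y+h)*u - u\<^sup>2/2) = exp (y*u - u\<^sup>2/2) * exp (h*u)"
              by (simp add: exp_add[symmetric] algebra_simps)
            then show ?thesis by (simp add: K_def algebra_simps)
          qed
          have b1: "\<bar>exp (h*u) - 1\<bar> \<le> \<bar>h\<bar> * u * exp u"
          proof -
            have "\<bar>exp (h*u) - 1\<bar> \<le> \<bar>h*u\<bar> * exp \<bar>h*u\<bar>" by (rule exp_diff_bound)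
            also have "\<dots> \<le> \<bar>h\<bar> * u * exp u"
              using u elim by (auto simp: abs_mult intro!: mult_left_mono)
            finally show ?thesis .
          qed
          have Kp: "K (q-1) y u > 0" unfolding K_def using u by simp
          have "norm (?s h u) = K (q-1) y u * \<bar>exp (h*u) - 1\<bar> / \<bar>h\<bar>"
            using u Kp by (simp add: kd abs_mult)
          also have "\<dots> \<le> K (q-1) y u * (\<bar>h\<bar> * u * exp u) / \<bar>h\<bar>"
            using b1 Kp h by (intro divide_right_mono mult_left_mono) auto
          also have "\<dots> = K (q-1) y u * u * exp u" using h by simp
          also have "\<dots> = ?w u"
            using u by (simp add: K_def powr_add[symmetric] exp_add[symmetric] algebra_simps
                  powr_diff)
          finally show ?thesis .
        next
          case False
          then show ?thesis
            by (cases "u > 0") (auto simp: K_def)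
        qed
      qed
    qed
  qed
  then show "((\<lambda>h. (Fq q (y + h) - Fq q y) / h) \<longlongrightarrow> Fq (q + 1) y) (at 0)"
    unfolding eq by (simp add: Fq_K)
qed


lemma Fq_pos:
  assumes q: "q > 0"
  shows "Fq q y > 0"
proof -
  let ?f = "\<lambda>u. indicator {0<..} u * K (q-1) y u"
  have int: "integrable lborel ?f" using q by (intro K_intI) simp
  have nn: "AE u in lborel. 0 \<le> ?f u" by (rule AE_I2) (auto simp: K_def indicator_def)
  have ge: "Fq q y \<ge> 0" unfolding Fq_K by (rule integral_nonneg_AE[OF nn])
  have "Fq q y \<noteq> 0"
  proof
    assume "Fq q y = 0"
    then have "AE u in lborel. ?f u = 0"
      using integral_nonneg_eq_0_iff_AE[OF int nn] by (simp add: Fq_K)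
    then obtain N where N: "{u \<in> space lborel. \<not> ?f u = 0} \<subseteq> N" "emeasure lborel N = 0" "N \<in> sets lborel"
      by (rule AE_E)
    have "{0<..<1::real} \<subseteq> N"
      using N(1) by (auto simp: K_def indicator_def)
    then have "emeasure lborel {0<..<1::real} \<le> emeasure lborel N"
      by (intro emeasure_mono N(3))
    then show False using N(2) by simp
  qed
  with ge show ?thesis by simp
qed

lemma Fq_quad:
  assumes q: "q > 0"
  shows "Fq (q+2) y - 2*l*Fq (q+1) y + l\<^sup>2 * Fq q y \<ge> 0"
proof -
  have i1: "integrable lborel (\<lambda>u. indicator {0<..} u * K (q+1) y u)" using q by (intro K_intI) simp
  have i2: "integrable lborel (\<lambda>u. indicator {0<..} u * K q y u)" using q by (intro K_intI) simp
  have i3: "integrable lborel (\<lambda>u. indicator {0<..} u * K (q-1) y u)" using q by (intro K_intI) simp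
  have "Fq (q+2) y - 2*l*Fq (q+1) y + l\<^sup>2 * Fq q y =
     integral\<^sup>L lborel (\<lambda>u. indicator {0<..} u * K (q+1) y u - 2*l*(indicator {0<..} u * K q y u)
         + l\<^sup>2 * (indicator {0<..} u * K (q-1) y u))"
    using i1 i2 i3 by (simp add: Fq_K add.commute)
  also have "\<dots> = integral\<^sup>L lborel (\<lambda>u. indicator {0<..} u * (K (q-1) y u * (u - l)\<^sup>2))"
  proof (intro Bochner_Integration.integral_cong refl)
    fix u :: real
    show "indicator {0<..} u * K (q+1) y u - 2*l*(indicator {0<..} u * K q y u)
         + l\<^sup>2 * (indicator {0<..} u * K (q-1) y u) = indicator {0<..} u * (K (q-1) y u * (u - l)\<^sup>2)"
    proof (cases "u > 0")
      case True
      have a: "u powr (q+1) = u powr (q-1) * u\<^sup>2"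
      proof -
        have "u powr (q+1) = u powr ((q-1) + 2)" by (simp add: add.commute)
        also have "\<dots> = u powr (q-1) * u powr 2" by (rule powr_add)
        finally show ?thesis using True by (simp add: powr_numeral)
      qed
      have b: "u powr q = u powr (q-1) * u"
      proof -
        have "u powr q = u powr ((q-1) + 1)" by simp
        also have "\<dots> = u powr (q-1) * u powr 1" by (rule powr_add)
        finally show ?thesis using True by simp
      qed
      show ?thesis using True unfolding K_def a b by (simp add: power2_eq_square algebra_simps)
    qed simp
  qed
  also have "\<dots> \<ge> 0" by (intro integral_nonneg_AE AE_I2) (auto simp: K_def)
  finally show ?thesis by simp
qed


lemma powr_p1: "(u::real) > 0 \<Longrightarrow> u powr (a+1) = u powr a * u"
  by (simp add: powr_add)

lemma K_deriv_u:
  assumes "u > 0"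
  shows "((\<lambda>u. K q y u) has_real_derivative (q * K (q-1) y u + y * K q y u - K (q+1) y u)) (at u)"
proof -
  have a: "u powr q = u powr (q-1) * u" using powr_p1[OF assms, of "q-1"] by simp
  have b: "u powr (q+1) = u powr (q-1) * u * u" using powr_p1[OF assms, of q] a by simp
  have b': "u powr (1+q) = u powr (q-1) * u * u" using b by (simp add: add.commute)
  show ?thesis unfolding K_def using assms
    by (auto intro!: derivative_eq_intros simp: a b b' algebra_simps power2_eq_square)
qed

lemma Fq_ode:
  assumes q: "q > 0"
  shows "Fq (q+2) y = y * Fq (q+1) y + q * Fq q y"
proof -
  let ?f = "\<lambda>u. q * K (q-1) y u + y * K q y u - K (q+1) y u"
  have i1: "integrable lborel (\<lambda>u. indicator {0<..} u * K (q+1) y u)" using q by (intro K_intI) simp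
  have i2: "integrable lborel (\<lambda>u. indicator {0<..} u * K q y u)" using q by (intro K_intI) simp
  have i3: "integrable lborel (\<lambda>u. indicator {0<..} u * K (q-1) y u)" using q by (intro K_intI) simp
  have si: "set_integrable lborel (einterval 0 \<infinity>) ?f"
  proof -
    have "integrable lborel (\<lambda>u. q * (indicator {0<..} u * K (q-1) y u) + y * (indicator {0<..} u * K q y u)
        - indicator {0<..} u * K (q+1) y u)"
      using i1 i2 i3 by auto
    then show ?thesis unfolding set_integrable_def zero_ereal_def
      by (simp add: algebra_simps)
  qed
  have "(LBINT u=0..\<infinity>. ?f u) = 0 - 0"
  proof (rule interval_integral_FTC_integrable[where F="K q y"])
    show "(0::ereal) < \<infinity>" by simp
    show "(K q y has_vector_derivative ?f x) (at x)" if "0 < ereal x" "ereal x < \<infinity>" for x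
      using K_deriv_u[of x q y] that by (simp add: has_real_derivative_iff_has_vector_derivative zero_ereal_def)
    show "isCont ?f x" if "0 < ereal x" "ereal x < \<infinity>" for x
      using that unfolding K_def by (auto intro!: continuous_intros simp: zero_ereal_def)
    show "set_integrable lborel (einterval 0 \<infinity>) ?f" by (rule si)
    have l0: "((\<lambda>u. K q y u) \<longlongrightarrow> 0) (at_right 0)"
    proof -
      have "((\<lambda>u::real. u powr q) \<longlongrightarrow> 0) (at_right 0)"
        using q by (intro tendsto_zero_powrI) (auto intro: tendsto_ident_at eventually_at_rightI[of 0 1])
      moreover have "((\<lambda>u::real. exp (y * u - u\<^sup>2 / 2)) \<longlongrightarrow> exp (y * 0 - 0\<^sup>2/2)) (at_right 0)"
        by (intro tendsto_intros tendsto_ident_at) auto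
      ultimately have "((\<lambda>u::real. u powr q * exp (y * u - u\<^sup>2 / 2)) \<longlongrightarrow> 0 * exp (y * 0 - 0\<^sup>2/2)) (at_right 0)"
        by (rule tendsto_mult)
      then show ?thesis unfolding K_def by simp
    qed
    show "((K q y \<circ> real_of_ereal) \<longlongrightarrow> 0) (at_right 0)"
      using l0 unfolding zero_ereal_def ereal_tendsto_simps by simp
    have "((\<lambda>u::real. u powr q * exp (y * u - u\<^sup>2 / 2)) \<longlongrightarrow> 0) at_top" by real_asymp
    then show "((K q y \<circ> real_of_ereal) \<longlongrightarrow> 0) (at_left \<infinity>)"
      unfolding ereal_tendsto_simps K_def by simp
  qed
  then have "(LBINT u:{0<..}. ?f u) = 0"
    by (simp add: interval_lebesgue_integral_0_infty)
  then have "integral\<^sup>L lborel (\<lambda>u. q * (indicator {0<..} u * K (q-1) y u) + y * (indicator {0<..} u * K q y u)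
        - indicator {0<..} u * K (q+1) y u) = 0"
    unfolding set_lebesgue_integral_def by (simp add: algebra_simps)
  then have "q * Fq q y + y * Fq (q+1) y - Fq (q+2) y = 0"
    using i1 i2 i3 by (simp add: Fq_K add.commute)
  then show ?thesis by simp
qed


definition H :: "real \<Rightarrow> real \<Rightarrow> real" where "H q y = Fq q y + Gq q y"
definition H1 :: "real \<Rightarrow> real \<Rightarrow> real" where "H1 q y = Fq (q+1) y - Fq (q+1) (-y)"
definition H2 :: "real \<Rightarrow> real \<Rightarrow> real" where "H2 q y = Fq (q+2) y + Fq (q+2) (-y)"

context fixes q :: real assumes q: "q > 0"
begin

lemma Fq_deriv' [derivative_intros]:
  "(f has_real_derivative f') (at x) \<Longrightarrow> ((\<lambda>x. Fq q (f x)) has_real_derivative Fq (q+1) (f x) * f') (at x)"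
  using DERIV_chain2[OF Fq_deriv[OF q]] by blast

lemma Fq1_deriv' [derivative_intros]:
  "(f has_real_derivative f') (at x) \<Longrightarrow> ((\<lambda>x. Fq (q+1) (f x)) has_real_derivative Fq (q+2) (f x) * f') (at x)"
  using DERIV_chain2[OF Fq_deriv[of "q+1"]] q by (simp add: add.assoc)

lemma Gq_deriv: "(Gq q has_real_derivative - Fq (q+1) (-y)) (at y)"
  unfolding Gq_def[abs_def] by (auto intro!: derivative_eq_intros)

lemma H_deriv: "((\<lambda>y. Fq q y + Gq q y) has_real_derivative H1 q y) (at y)"
  unfolding Gq_def H1_def by (auto intro!: derivative_eq_intros)

lemma H_deriv': "(H q has_real_derivative H1 q y) (at y)"
  using H_deriv unfolding H_def[abs_def] by simp

lemma H1_deriv: "(H1 q has_real_derivative H2 q y) (at y)"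
  unfolding H1_def[abs_def] H2_def by (auto intro!: derivative_eq_intros)

lemma deriv_H: "deriv (\<lambda>y. Fq q y + Gq q y) y = H1 q y"
  by (rule DERIV_imp_deriv[OF H_deriv])

lemma deriv_H': "deriv (H q) y = H1 q y"
  by (rule DERIV_imp_deriv[OF H_deriv'])

lemma Fq_pos': "Fq q y > 0" using Fq_pos[OF q] .
lemma Fq1_pos: "Fq (q+1) y > 0" using Fq_pos[of "q+1"] q by simp
lemma Fq2_pos: "Fq (q+2) y > 0" using Fq_pos[of "q+2"] q by simp

lemma G_pos: "Gq q y > 0" unfolding Gq_def by (rule Fq_pos')
lemma H_pos: "H q y > 0" unfolding H_def using Fq_pos' G_pos by (simp add: add_pos_pos)
lemma H_ne [simp]: "H q y \<noteq> 0" using H_pos[of y] by simp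

lemma H2_ode: "H2 q y = y * H1 q y + q * H q y"
  unfolding H2_def H1_def H_def Gq_def using Fq_ode[OF q, of y] Fq_ode[OF q, of "-y"]
  by (simp add: algebra_simps)

lemma Fq1_mono: "a < b \<Longrightarrow> Fq (q+1) a < Fq (q+1) b"
proof -
  assume ab: "a < b"
  have d: "\<And>x. (Fq (q+1) has_real_derivative Fq (q+2) x) (at x)"
    using Fq_deriv[of "q+1"] q by (simp add: add.assoc)
  show ?thesis
    by (rule DERIV_pos_imp_increasing[where f="Fq (q+1)", OF ab]) (metis d Fq2_pos)
qed

lemma H1_pos: "y > 0 \<Longrightarrow> H1 q y > 0"
  unfolding H1_def using Fq1_mono[of "-y" y] by simp

lemma H_logconv: "H2 q y * H q y \<ge> (H1 q y)\<^sup>2"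
proof -
  define l where "l = H1 q y / H q y"
  have "Fq (q+2) y - 2*l*Fq (q+1) y + l\<^sup>2 * Fq q y \<ge> 0" by (rule Fq_quad[OF q])
  moreover have "Fq (q+2) (-y) - 2*(-l)*Fq (q+1) (-y) + (-l)\<^sup>2 * Fq q (-y) \<ge> 0" by (rule Fq_quad[OF q])
  ultimately have "H2 q y - 2*l*H1 q y + l\<^sup>2 * H q y \<ge> 0"
    unfolding H2_def H1_def H_def Gq_def by (simp add: algebra_simps)
  then have "(H2 q y - 2*l*H1 q y + l\<^sup>2 * H q y) * H q y \<ge> 0"
    using H_pos[of y] by simp
  moreover have "(H2 q y - 2*l*H1 q y + l\<^sup>2 * H q y) * H q y = H2 q y * H q y - (H1 q y)\<^sup>2"
    using H_pos[of y] unfolding l_def by (simp add: field_simps power2_eq_square)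
  ultimately show ?thesis by simp
qed

definition p :: "real \<Rightarrow> real" where "p y = H1 q y / H q y"

lemma p_deriv: "(p has_real_derivative (H2 q y * H q y - H1 q y * H1 q y) / (H q y)\<^sup>2) (at y)"
proof -
  have "((\<lambda>y. H1 q y / H q y) has_real_derivative (H2 q y * H q y - H1 q y * H1 q y) / (H q y * H q y)) (at y)"
    using H_pos[of y] by (intro DERIV_divide H1_deriv H_deriv') auto
  then show ?thesis unfolding p_def[abs_def] by (simp add: power2_eq_square)
qed

lemma p_mono: "a \<le> b \<Longrightarrow> p a \<le> p b"
  by (rule DERIV_nonneg_imp_increasing_open[where f=p])
     (auto intro!: exI p_deriv divide_nonneg_pos simp: H_logconv[unfolded power2_eq_square] H_pos
       intro: DERIV_continuous continuous_at_imp_continuous_on)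

lemma p_pos: "y > 0 \<Longrightarrow> p y > 0"
  unfolding p_def using H1_pos H_pos by simp

lemma p_cont: "isCont p y" by (rule DERIV_isCont[OF p_deriv])

lemma r_strict: "0 < a \<Longrightarrow> a < b \<Longrightarrow> a * p a < b * p b"
proof -
  assume a: "0 < a" "a < b"
  have "a * p a \<le> a * p b" using p_mono[of a b] a by (intro mult_left_mono) auto
  also have "\<dots> < b * p b" using a p_pos[of b] by (intro mult_strict_right_mono) auto
  finally show ?thesis .
qed

lemma Dstar_ex1: "\<exists>!D. D > 0 \<and> q - D * deriv (\<lambda>y. Fq q y + Gq q y) D / (Fq q D + Gq q D) = 0"
proof -
  have eqv: "q - D * deriv (\<lambda>y. Fq q y + Gq q y) D / (Fq q D + Gq q D) = 0 \<longleftrightarrow> D * p D = q" for D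
    unfolding p_def H_def[symmetric] deriv_H' by auto
  define D1 where "D1 = 1 + q / p 1"
  have p1: "p 1 > 0" using p_pos by simp
  have D1: "D1 \<ge> 1" unfolding D1_def using p1 q by simp
  have "D1 * p D1 \<ge> D1 * p 1" using p_mono[OF D1] D1 by (intro mult_left_mono) auto
  moreover have "D1 * p 1 > q" unfolding D1_def using p1 by (simp add: field_simps)
  ultimately have "q \<le> D1 * p D1" by simp
  moreover have "0 * p 0 \<le> q" using q by simp
  moreover have "\<forall>x. 0\<le>x \<and> x\<le>D1 \<longrightarrow> isCont (\<lambda>x. x * p x) x"
    by (auto intro!: continuous_intros p_cont)
  ultimately obtain D where D: "0 \<le> D" "D \<le> D1" "D * p D = q"
    using IVT[of "\<lambda>x. x * p x" 0 q D1] D1 by auto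
  have Dpos: "D > 0" using D q by (cases "D = 0") auto
  show ?thesis
  proof (rule ex1I[of _ D])
    show "D > 0 \<and> q - D * deriv (\<lambda>y. Fq q y + Gq q y) D / (Fq q D + Gq q D) = 0"
      using Dpos D eqv by simp
    fix E assume E: "E > 0 \<and> q - E * deriv (\<lambda>y. Fq q y + Gq q y) E / (Fq q E + Gq q E) = 0"
    then have E': "E * p E = q" "E > 0" using eqv by auto
    show "E = D"
    proof (rule ccontr)
      assume "E \<noteq> D"
      then consider "E < D" | "D < E" by linarith
      then show False
        using r_strict[of E D] r_strict[of D E] E' D Dpos by cases auto
    qed
  qed
qed

lemma Dstar_prop: "Dstar q > 0" "Dstar q * H1 q (Dstar q) = q * H q (Dstar q)"
proof -
  have "Dstar q > 0 \<and> q - Dstar q * deriv (\<lambda>y. Fq q y + Gq q y) (Dstar q) / (Fq q (Dstar q) + Gq q (Dstar q)) = 0"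
    unfolding Dstar_def by (rule theI'[OF Dstar_ex1])
  then show "Dstar q > 0" "Dstar q * H1 q (Dstar q) = q * H q (Dstar q)"
    using H_pos[of "Dstar q"] unfolding H_def[symmetric] deriv_H' by (auto simp: field_simps)
qed

end


definition C :: "real \<Rightarrow> real" where "C q = Dstar q powr q / H q (Dstar q)"
definition phi :: "real \<Rightarrow> real \<Rightarrow> real" where "phi q A = C q * H q A - A powr q"
definition phi1 :: "real \<Rightarrow> real \<Rightarrow> real" where "phi1 q A = C q * H1 q A - q * A powr (q-1)"
definition phi2 :: "real \<Rightarrow> real \<Rightarrow> real" where "phi2 q A = C q * H2 q A - q * (q-1) * A powr (q-2)"
definition G1 :: "real \<Rightarrow> real \<Rightarrow> real" where "G1 q A = - Fq (q+1) (-A)"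
definition G2 :: "real \<Rightarrow> real \<Rightarrow> real" where "G2 q A = Fq (q+2) (-A)"
definition psi :: "real \<Rightarrow> real \<Rightarrow> real" where "psi q A = phi1 q A * Gq q A - phi q A * G1 q A"
definition chi :: "real \<Rightarrow> real \<Rightarrow> real" where "chi q A = exp (-(A\<^sup>2)/2) * psi q A"
definition chi1 :: "real \<Rightarrow> real \<Rightarrow> real" where
  "chi1 q A = exp (-(A\<^sup>2)/2) * (q * A powr (q-2) * Gq q A * (2*A\<^sup>2 - q + 1))"

context fixes q :: real assumes q: "q > 0"
begin

lemma C_pos: "C q > 0"
  unfolding C_def using Dstar_prop[OF q] H_pos[OF q] by simp

lemma w_eq: "wfun q A = phi q A / Gq q A"
  unfolding wfun_def phi_def C_def H_def by simp

lemma G_deriv: "(Gq q has_real_derivative G1 q A) (at A)"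
  unfolding G1_def using Gq_deriv[OF q] .

lemma G1_deriv: "(G1 q has_real_derivative G2 q A) (at A)"
  unfolding G1_def[abs_def] G2_def by (auto intro!: derivative_eq_intros simp: q)

lemma G2_ode: "G2 q A = A * G1 q A + q * Gq q A"
  unfolding G2_def G1_def Gq_def using Fq_ode[OF q, of "-A"] by simp

lemma phi_deriv: "A > 0 \<Longrightarrow> (phi q has_real_derivative phi1 q A) (at A)"
  unfolding phi_def[abs_def] phi1_def
  by (intro DERIV_diff DERIV_cmult H_deriv'[OF q] has_real_derivative_powr)

lemma phi1_deriv: "A > 0 \<Longrightarrow> (phi1 q has_real_derivative phi2 q A) (at A)"
proof -
  assume A: "A > 0"
  have "((\<lambda>A. C q * H1 q A - q * A powr (q-1)) has_real_derivative C q * H2 q A - q * ((q-1) * A powr (q-1-1))) (at A)"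
    by (intro DERIV_diff DERIV_cmult H1_deriv[OF q] has_real_derivative_powr A)
  then show ?thesis unfolding phi1_def[abs_def] phi2_def by (simp add: algebra_simps)
qed

lemma w_deriv: "A > 0 \<Longrightarrow> (wfun q has_real_derivative psi q A / (Gq q A)\<^sup>2) (at A)"
proof -
  assume A: "A > 0"
  have "((\<lambda>A. phi q A / Gq q A) has_real_derivative (phi1 q A * Gq q A - phi q A * G1 q A) / (Gq q A * Gq q A)) (at A)"
    by (intro DERIV_divide phi_deriv A G_deriv) (use G_pos[OF q, of A] in simp)
  then show ?thesis unfolding w_eq[abs_def] psi_def by (simp add: power2_eq_square)
qed

lemma chi_deriv: "A > 0 \<Longrightarrow> (chi q has_real_derivative chi1 q A) (at A)"
proof -
  assume A: "A > 0"
  have dpsi: "(psi q has_real_derivative (phi2 q A * Gq q A + G1 q A * phi1 q A - (phi1 q A * G1 q A + G2 q A * phi q A))) (at A)"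
    unfolding psi_def[abs_def]
    by (intro DERIV_diff DERIV_mult[OF phi1_deriv[OF A] G_deriv] DERIV_mult[OF phi_deriv[OF A] G1_deriv])
  have d: "(chi q has_real_derivative exp (-(A\<^sup>2)/2) * (-A) * psi q A + exp (-(A\<^sup>2)/2) * (phi2 q A * Gq q A - phi q A * G2 q A)) (at A)"
    unfolding chi_def[abs_def]
    by (rule derivative_eq_intros dpsi refl | simp)+
  define P where "P = A powr (q-2)"
  have P1: "A powr (q-1) = P * A" unfolding P_def using powr_p1[OF A, of "q-2"] by simp
  have P2: "A powr q = P * A * A" unfolding P_def using powr_p1[OF A, of "q-1"] P1[unfolded P_def] by simp
  have id: "(-A) * psi q A + (phi2 q A * Gq q A - phi q A * G2 q A) = q * P * Gq q A * (2*A\<^sup>2 - q + 1)"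
    unfolding psi_def phi_def phi1_def phi2_def G2_ode H2_ode[OF q] P1 P2 P_def[symmetric]
    by (simp add: algebra_simps power2_eq_square)
  have "exp (-(A\<^sup>2)/2) * (-A) * psi q A + exp (-(A\<^sup>2)/2) * (phi2 q A * Gq q A - phi q A * G2 q A)
      = exp (-(A\<^sup>2)/2) * ((-A) * psi q A + (phi2 q A * Gq q A - phi q A * G2 q A))"
    by (simp add: algebra_simps)
  also have "\<dots> = chi1 q A" unfolding id chi1_def P_def by simp
  finally show ?thesis using d by simp
qed

lemma phi_D: "phi q (Dstar q) = 0"
  unfolding phi_def C_def using H_pos[OF q, of "Dstar q"] by simp

lemma phi1_D: "phi1 q (Dstar q) = 0"
proof -
  have D: "Dstar q > 0" "Dstar q * H1 q (Dstar q) = q * H q (Dstar q)" using Dstar_prop[OF q] by auto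
  have P: "Dstar q powr q = Dstar q powr (q-1) * Dstar q" using powr_p1[OF D(1), of "q-1"] by simp
  have "C q * H1 q (Dstar q) = Dstar q powr (q-1) * (Dstar q * H1 q (Dstar q)) / H q (Dstar q)"
    unfolding C_def P by simp
  also have "\<dots> = q * Dstar q powr (q-1)" unfolding D(2) using H_pos[OF q, of "Dstar q"] by simp
  finally show ?thesis unfolding phi1_def by simp
qed

lemma chi_D: "chi q (Dstar q) = 0"
  unfolding chi_def psi_def phi_D phi1_D by simp

lemma w_cont: "continuous_on {0..} (wfun q)"
proof -
  have cH: "continuous_on UNIV (H q)" by (rule DERIV_continuous_on[OF H_deriv'[OF q]])
  have cG: "continuous_on UNIV (Gq q)" by (rule DERIV_continuous_on[OF Gq_deriv[OF q]])
  have c1: "continuous_on {0..} (\<lambda>A::real. A powr q)"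
    using q by (intro continuous_on_powr' continuous_on_id continuous_on_const) auto
  have c2: "continuous_on {0..} (\<lambda>A. C q * H q A - A powr q)"
    by (intro continuous_on_diff continuous_on_mult continuous_on_const c1 continuous_on_subset[OF cH]) auto
  have "continuous_on {0..} (\<lambda>A. (C q * H q A - A powr q) / Gq q A)"
    using G_pos[OF q] by (intro continuous_on_divide c2 continuous_on_subset[OF cG]) (auto simp: less_imp_neq[symmetric])
  then show ?thesis unfolding w_eq[abs_def] phi_def .
qed

lemma w_0: "wfun q 0 > 0"
  unfolding w_eq phi_def using C_pos H_pos[OF q] G_pos[OF q] by simp

lemma w_D: "wfun q (Dstar q) = 0"
  unfolding w_eq phi_D by simp

end


context fixes q :: real assumes q: "q > 0"
begin

lemma chi1_pos: "A > 0 \<Longrightarrow> 2*A\<^sup>2 - q + 1 > 0 \<Longrightarrow> chi1 q A > 0"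
  unfolding chi1_def using q G_pos[OF q, of A] by (simp add: mult_pos_pos)

lemma chi1_neg: "A > 0 \<Longrightarrow> 2*A\<^sup>2 - q + 1 < 0 \<Longrightarrow> chi1 q A < 0"
  unfolding chi1_def using q G_pos[OF q, of A] by (simp add: mult_pos_neg)

lemma chi_cont: "0 < a \<Longrightarrow> continuous_on {a..b} (chi q)"
  by (intro continuous_at_imp_continuous_on ballI DERIV_isCont[OF chi_deriv[OF q]]) auto

lemma w_diff: "x > 0 \<Longrightarrow> wfun q differentiable (at x)"
  using w_deriv[OF q] by (auto simp: real_differentiable_def)

lemma psi_sign_w: "A > 0 \<Longrightarrow> psi q A / (Gq q A)\<^sup>2 > 0 \<longleftrightarrow> chi q A > 0"
  unfolding chi_def using G_pos[OF q, of A] by (simp add: zero_less_mult_iff zero_less_divide_iff)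

lemma no_two_max:
  assumes B: "0 \<le> B1" "B1 < B2" "B2 \<le> Dstar q"
    and M1: "\<forall>B\<in>{0..Dstar q}. wfun q B \<le> wfun q B1"
    and M2: "\<forall>B\<in>{0..Dstar q}. wfun q B \<le> wfun q B2"
  shows False
proof -
  let ?D = "Dstar q"
  have "wfun q B1 \<le> wfun q B2" using M2 B by auto
  moreover have "wfun q B2 \<le> wfun q B1" using M1 B by auto
  ultimately have eqw: "wfun q B1 = wfun q B2" by simp
  have dif: "wfun q differentiable (at x)" if "B1 < x" for x
    using w_diff that B(1) by simp
  have wc: "continuous_on {a..b} (wfun q)" if "0 \<le> a" for a b
    by (rule continuous_on_subset[OF w_cont[OF q]]) (use that in auto)
  obtain l z where z: "B1 < z" "z < B2" "DERIV (wfun q) z :> l" "wfun q B2 - wfun q B1 = (B2 - B1) * l"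
    using MVT[OF B(2) wc[OF B(1)] dif] by blast
  have z0: "z > 0" using z B by simp
  have "l = 0" using z(4) eqw B(2) by simp
  with DERIV_unique[OF z(3) w_deriv[OF q z0]] have "psi q z / (Gq q z)\<^sup>2 = 0" by simp
  then have chiz: "chi q z = 0" unfolding chi_def using G_pos[OF q, of z] by simp
  have zD: "z < ?D" using z B by simp
  show False
  proof (cases "\<forall>x. z < x \<longrightarrow> 2*x\<^sup>2 - q + 1 > 0")
    case True
    have "chi q z < chi q ?D"
      by (rule DERIV_pos_imp_increasing_open[OF zD _ chi_cont[OF z0]])
         (use True z0 in \<open>auto intro!: exI chi_deriv[OF q] chi1_pos\<close>)
    then show False using chiz chi_D[OF q] by simp
  next
    case False
    then obtain x where x: "z < x" "2*x\<^sup>2 - q + 1 \<le> 0" by auto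
    have neg: "2*y\<^sup>2 - q + 1 < 0" if "0 < y" "y \<le> z" for y
    proof -
      have "y\<^sup>2 < x\<^sup>2" using that x(1) by (intro power_strict_mono) auto
      then show ?thesis using x(2) by simp
    qed
    have chipos: "chi q \<xi> > 0" if "0 < \<xi>" "\<xi> < z" for \<xi>
    proof -
      have "chi q \<xi> > chi q z"
        by (rule DERIV_neg_imp_decreasing_open[OF that(2) _ chi_cont[OF that(1)]])
           (use neg that in \<open>auto intro!: exI chi_deriv[OF q] chi1_neg\<close>)
      then show ?thesis using chiz by simp
    qed
    obtain l' \<xi> where xi: "B1 < \<xi>" "\<xi> < z" "DERIV (wfun q) \<xi> :> l'" "wfun q z - wfun q B1 = (z - B1) * l'"
      using MVT[OF z(1) wc[OF B(1)] dif] by blast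
    have xi0: "\<xi> > 0" using xi B by simp
    have "l' = psi q \<xi> / (Gq q \<xi>)\<^sup>2" by (rule DERIV_unique[OF xi(3) w_deriv[OF q xi0]])
    then have "l' > 0" using psi_sign_w[OF xi0] chipos[OF xi0 xi(2)] by simp
    then have "(z - B1) * l' > 0" using z(1) by simp
    then have "wfun q z > wfun q B1" using xi(4) by simp
    moreover have "wfun q z \<le> wfun q B1" using M1 z0 zD by simp
    ultimately show False by simp
  qed
qed

lemma max_ex1: "\<exists>!A. A \<in> {0..Dstar q} \<and> (\<forall>B\<in>{0..Dstar q}. wfun q B \<le> wfun q A)"
proof -
  have "continuous_on {0..Dstar q} (wfun q)"
    by (rule continuous_on_subset[OF w_cont[OF q]]) auto
  then obtain A where A: "A \<in> {0..Dstar q}" "\<forall>B\<in>{0..Dstar q}. wfun q B \<le> wfun q A"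
    using continuous_attains_sup[of "{0..Dstar q}" "wfun q"] Dstar_prop[OF q] by auto
  show ?thesis
  proof (rule ex1I[of _ A])
    show "A \<in> {0..Dstar q} \<and> (\<forall>B\<in>{0..Dstar q}. wfun q B \<le> wfun q A)" using A by simp
    fix E assume E: "E \<in> {0..Dstar q} \<and> (\<forall>B\<in>{0..Dstar q}. wfun q B \<le> wfun q E)"
    show "E = A"
    proof (rule ccontr)
      assume "E \<noteq> A"
      then consider "E < A" | "A < E" by linarith
      then show False
      proof cases
        case 1 then show False using no_two_max[of E A] A E by auto
      next
        case 2 then show False using no_two_max[of A E] A E by auto
      qed
    qed
  qed
qed

lemma Astar_prop: "Astar q \<in> {0..Dstar q}" "\<forall>B\<in>{0..Dstar q}. wfun q B \<le> wfun q (Astar q)"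
proof -
  have "Astar q \<in> {0..Dstar q} \<and> (\<forall>B\<in>{0..Dstar q}. wfun q B \<le> wfun q (Astar q))"
    unfolding Astar_def by (rule theI'[OF max_ex1])
  then show "Astar q \<in> {0..Dstar q}" "\<forall>B\<in>{0..Dstar q}. wfun q B \<le> wfun q (Astar q)" by auto
qed

lemma Astar_lt: "Astar q < Dstar q"
proof -
  have "wfun q 0 \<le> wfun q (Astar q)" using Astar_prop Dstar_prop[OF q] by auto
  then have "Astar q \<noteq> Dstar q" using w_0[OF q] w_D[OF q] by auto
  then show ?thesis using Astar_prop by auto
qed

lemma Astar_fermat: "Astar q > 0 \<Longrightarrow> psi q (Astar q) = 0"
proof -
  assume A: "Astar q > 0"
  let ?A = "Astar q"
  have "psi q ?A / (Gq q ?A)\<^sup>2 = 0"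
  proof (rule DERIV_local_max[OF w_deriv[OF q A]])
    show "0 < min ?A (Dstar q - ?A)" using A Astar_lt by simp
    show "\<forall>y. \<bar>?A - y\<bar> < min ?A (Dstar q - ?A) \<longrightarrow> wfun q y \<le> wfun q ?A"
    proof (intro allI impI)
      fix y assume "\<bar>?A - y\<bar> < min ?A (Dstar q - ?A)"
      then have "y \<in> {0..Dstar q}" by (simp add: abs_less_iff)
      then show "wfun q y \<le> wfun q ?A" using Astar_prop(2) by blast
    qed
  qed
  then show ?thesis using G_pos[OF q, of ?A] by simp
qed

end


lemma lim_deriv_right:
  assumes "a < b" "\<And>x. x \<in> {a<..<b} \<Longrightarrow> deriv f x = g x" "isCont g a"
  shows "(deriv f \<longlongrightarrow> g a) (at_right a)"
proof (rule Lim_transform_eventually)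
  show "(g \<longlongrightarrow> g a) (at_right a)"
    using assms(3) unfolding isCont_def by (rule tendsto_within_subset) simp
  show "eventually (\<lambda>x. g x = deriv f x) (at_right a)"
    by (rule eventually_at_rightI[OF _ assms(1)]) (use assms(2) in simp)
qed

lemma lim_deriv_left:
  assumes "a < b" "\<And>x. x \<in> {a<..<b} \<Longrightarrow> deriv f x = g x" "isCont g b"
  shows "(deriv f \<longlongrightarrow> g b) (at_left b)"
proof (rule Lim_transform_eventually)
  show "(g \<longlongrightarrow> g b) (at_left b)"
    using assms(3) unfolding isCont_def by (rule tendsto_within_subset) simp
  show "eventually (\<lambda>x. g x = deriv f x) (at_left b)"
    by (rule eventually_at_leftI[OF _ assms(1)]) (use assms(2) in simp)
qed

context fixes q t :: real assumes q: "q > 0" and t: "0 \<le> t" "t < 1"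
begin

abbreviation "s \<equiv> sqrt (1 - t)"
abbreviation "k \<equiv> (1 - t) powr (q / 2)"

lemma s_pos: "s > 0" using t by simp

lemma A_nonneg: "Astar q \<ge> 0" using Astar_prop[OF q] by simp

lemma ds: "((\<lambda>y. y / s) has_real_derivative 1 / s) (at x)"
  using DERIV_cdivide[OF DERIV_ident, where c=s and x=x] by simp

lemma dms: "((\<lambda>y. - y / s) has_real_derivative - 1 / s) (at x)"
  using DERIV_cdivide[OF DERIV_minus[OF DERIV_ident], where c=s and x=x] by simp

lemma Gs_deriv: "((\<lambda>y. Gq q (y / s)) has_real_derivative G1 q (x / s) * (1 / s)) (at x)"
  by (rule DERIV_chain2[OF G_deriv[OF q] ds])

lemma Gms_deriv: "((\<lambda>y. Gq q (- y / s)) has_real_derivative G1 q (- x / s) * (- 1 / s)) (at x)"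
  by (rule DERIV_chain2[OF G_deriv[OF q] dms])

lemma Hs_deriv: "((\<lambda>y. H q (y / s)) has_real_derivative H1 q (x / s) * (1 / s)) (at x)"
  by (rule DERIV_chain2[OF H_deriv'[OF q] ds])

lemma deriv_W_right:
  assumes x: "x > Astar q * s"
  shows "deriv (Wstar q t) x = k * (G1 q (x / s) * (1 / s)) * wfun q (Astar q)"
proof (rule DERIV_imp_deriv)
  have "((\<lambda>y. k * Gq q (y / s) * wfun q (Astar q)) has_real_derivative k * (G1 q (x / s) * (1 / s)) * wfun q (Astar q)) (at x)"
    by (intro DERIV_cmult DERIV_cmult_right Gs_deriv)
  then show "(Wstar q t has_real_derivative k * (G1 q (x / s) * (1 / s)) * wfun q (Astar q)) (at x)"
  proof (rule has_field_derivative_transform_within_open[where S="{Astar q * s<..}"])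
    show "open {Astar q * s<..}" by simp
    show "x \<in> {Astar q * s<..}" using x by simp
    fix y assume y: "y \<in> {Astar q * s<..}"
    have "0 \<le> Astar q * s" using A_nonneg s_pos by simp
    then have "\<bar>y\<bar> = y" using y by simp
    then show "k * Gq q (y / s) * wfun q (Astar q) = Wstar q t y"
      unfolding Wstar_def using y by simp
  qed
qed

lemma deriv_W_left:
  assumes x: "x < - Astar q * s"
  shows "deriv (Wstar q t) x = k * (G1 q (- x / s) * (- 1 / s)) * wfun q (Astar q)"
proof (rule DERIV_imp_deriv)
  have "((\<lambda>y. k * Gq q (- y / s) * wfun q (Astar q)) has_real_derivative k * (G1 q (- x / s) * (- 1 / s)) * wfun q (Astar q)) (at x)"
    by (intro DERIV_cmult DERIV_cmult_right Gms_deriv)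
  then show "(Wstar q t has_real_derivative k * (G1 q (- x / s) * (- 1 / s)) * wfun q (Astar q)) (at x)"
  proof (rule has_field_derivative_transform_within_open[where S="{..< - Astar q * s}"])
    show "open {..< - Astar q * s}" by simp
    show "x \<in> {..< - Astar q * s}" using x by simp
    fix y assume y: "y \<in> {..< - Astar q * s}"
    have "0 \<le> Astar q * s" using A_nonneg s_pos by simp
    then have "\<bar>y\<bar> = - y" using y by simp
    then show "k * Gq q (- y / s) * wfun q (Astar q) = Wstar q t y"
      unfolding Wstar_def using y by simp
  qed
qed

lemma deriv_h_right:
  assumes x: "0 < x" "x < Dstar q * s"
  shows "deriv (hfun q t) x = k * Dstar q powr q * (H1 q (x / s) * (1 / s)) / H q (Dstar q) - q * x powr (q - 1)"
proof (rule DERIV_imp_deriv)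
  have "((\<lambda>y. k * Dstar q powr q * H q (y / s) / H q (Dstar q) - y powr q) has_real_derivative
      k * Dstar q powr q * (H1 q (x / s) * (1 / s)) / H q (Dstar q) - q * x powr (q - 1)) (at x)"
    by (intro DERIV_diff DERIV_cdivide DERIV_cmult Hs_deriv has_real_derivative_powr x)
  then show "(hfun q t has_real_derivative k * Dstar q powr q * (H1 q (x / s) * (1 / s)) / H q (Dstar q) - q * x powr (q - 1)) (at x)"
  proof (rule has_field_derivative_transform_within_open[where S="{0<..<Dstar q * s}"])
    show "open {0<..<Dstar q * s}" by simp
    show "x \<in> {0<..<Dstar q * s}" using x by simp
    fix y assume y: "y \<in> {0<..<Dstar q * s}"
    then show "k * Dstar q powr q * H q (y / s) / H q (Dstar q) - y powr q = hfun q t y"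
      unfolding hfun_def Ubar_def H_def by simp
  qed
qed

lemma deriv_h_left:
  assumes x: "- Dstar q * s < x" "x < 0"
  shows "deriv (hfun q t) x = k * Dstar q powr q * (H1 q (x / s) * (1 / s)) / H q (Dstar q) - q * (- x) powr (q - 1) * (- 1)"
proof (rule DERIV_imp_deriv)
  have p: "((\<lambda>y. (- y) powr q) has_real_derivative q * (- x) powr (q - 1) * (- 1)) (at x)"
    by (rule DERIV_chain2[OF has_real_derivative_powr]) (use x in \<open>auto intro!: derivative_eq_intros\<close>)
  have "((\<lambda>y. k * Dstar q powr q * H q (y / s) / H q (Dstar q) - (- y) powr q) has_real_derivative
      k * Dstar q powr q * (H1 q (x / s) * (1 / s)) / H q (Dstar q) - q * (- x) powr (q - 1) * (- 1)) (at x)"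
    by (intro DERIV_diff DERIV_cdivide DERIV_cmult Hs_deriv p)
  then show "(hfun q t has_real_derivative k * Dstar q powr q * (H1 q (x / s) * (1 / s)) / H q (Dstar q) - q * (- x) powr (q - 1) * (- 1)) (at x)"
  proof (rule has_field_derivative_transform_within_open[where S="{- Dstar q * s<..<0}"])
    show "open {- Dstar q * s<..<0}" by simp
    show "x \<in> {- Dstar q * s<..<0}" using x by simp
    fix y assume y: "y \<in> {- Dstar q * s<..<0}"
    then have "\<bar>y\<bar> = - y" "\<bar>y\<bar> < Dstar q * s" by auto
    then show "k * Dstar q powr q * H q (y / s) / H q (Dstar q) - (- y) powr q = hfun q t y"
      unfolding hfun_def Ubar_def H_def by simp
  qed
qed

end


lemma key_identity:
  assumes q: "q > 0" and t: "0 \<le> t" "t < 1" and A: "Astar q > 0"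
  shows "(1 - t) powr (q / 2) * Dstar q powr q * (H1 q (Astar q) * (1 / sqrt (1 - t))) / H q (Dstar q)
           - q * (Astar q * sqrt (1 - t)) powr (q - 1)
         = (1 - t) powr (q / 2) * (G1 q (Astar q) * (1 / sqrt (1 - t))) * wfun q (Astar q)"
proof -
  define s where "s = sqrt (1 - t)"
  define k where "k = (1 - t) powr (q / 2)"
  define a where "a = Astar q"
  have s: "s > 0" unfolding s_def using t by simp
  have ks: "k = s powr q"
  proof -
    have "s = (1 - t) powr (1/2)" unfolding s_def using t by (simp add: powr_half_sqrt)
    then have "s powr q = (1 - t) powr (1/2 * q)" by (simp add: powr_powr)
    then show ?thesis unfolding k_def by simp
  qed
  have sq: "s powr q = s powr (q - 1) * s" using powr_p1[OF s, of "q-1"] by simp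
  have ps: "(a * s) powr (q - 1) = a powr (q - 1) * (k / s)"
    using A s unfolding a_def by (simp add: powr_mult ks sq)
  have psi0: "phi1 q a * Gq q a = phi q a * G1 q a"
    using Astar_fermat[OF q A] unfolding psi_def a_def by simp
  have Gp: "Gq q a > 0" by (rule G_pos[OF q])
  have phi1e: "phi1 q a = phi q a * G1 q a / Gq q a" using psi0 Gp by (simp add: field_simps)
  have "k * Dstar q powr q * (H1 q a * (1 / s)) / H q (Dstar q) - q * (a * s) powr (q - 1)
      = (k / s) * phi1 q a"
    unfolding ps phi1_def C_def using s H_pos[OF q, of "Dstar q"] by (simp add: field_simps)
  also have "\<dots> = k * (G1 q a * (1 / s)) * wfun q a"
    unfolding phi1e w_eq[OF q] by (simp add: field_simps)
  finally show ?thesis unfolding s_def k_def a_def .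
qed

theorem lemma5p4:
  fixes q t :: real
  assumes "q > 0" and "0 \<le> t" and "t < 1"
  shows "(Astar q > 0 \<longrightarrow>
            (\<exists>L. (deriv (Wstar q t) \<longlongrightarrow> L) (at_right (Astar q * sqrt (1 - t)))
                 \<and> (deriv (hfun q t) \<longlongrightarrow> L) (at_left (Astar q * sqrt (1 - t))))
          \<and> (\<exists>L. (deriv (Wstar q t) \<longlongrightarrow> L) (at_left (- Astar q * sqrt (1 - t)))
                 \<and> (deriv (hfun q t) \<longlongrightarrow> L) (at_right (- Astar q * sqrt (1 - t)))))
       \<and> (Astar q = 0 \<longrightarrow>
            (\<exists>L1 L2. (deriv (Wstar q t) \<longlongrightarrow> L1) (at_right 0)
                    \<and> (deriv (Wstar q t) \<longlongrightarrow> L2) (at_left 0) \<and> L1 < L2))"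
proof -
  note q = assms(1) and t = assms(2,3)
  define s where "s = sqrt (1 - t)"
  define k where "k = (1 - t) powr (q / 2)"
  define A where "A = Astar q"
  define D where "D = Dstar q"
  define wA where "wA = wfun q A"
  have s: "s > 0" unfolding s_def using t by simp
  have kp: "k > 0" unfolding k_def using t by simp
  have A0: "A \<ge> 0" unfolding A_def using A_nonneg[OF q t] .
  have AD: "A < D" unfolding A_def D_def using Astar_lt[OF q] .
  have cG1: "isCont (G1 q) y" for y by (rule DERIV_isCont[OF G1_deriv[OF q]])
  have cH1: "isCont (H1 q) y" for y by (rule DERIV_isCont[OF H1_deriv[OF q]])
  have H1m: "H1 q (- y) = - H1 q y" for y unfolding H1_def by simp
  have part1: "A > 0 \<longrightarrow>
            (\<exists>L. (deriv (Wstar q t) \<longlongrightarrow> L) (at_right (A * s))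
                 \<and> (deriv (hfun q t) \<longlongrightarrow> L) (at_left (A * s)))
          \<and> (\<exists>L. (deriv (Wstar q t) \<longlongrightarrow> L) (at_left (- A * s))
                 \<and> (deriv (hfun q t) \<longlongrightarrow> L) (at_right (- A * s)))"
  proof
    assume Ap: "A > 0"
    have As: "A * s > 0" using Ap s by simp
    have AsD: "A * s < D * s" using AD s by simp
    have KI: "k * D powr q * (H1 q A * (1 / s)) / H q D - q * (A * s) powr (q - 1)
         = k * (G1 q A * (1 / s)) * wA"
      using key_identity[OF q t Ap[unfolded A_def]] unfolding s_def k_def A_def D_def wA_def .
    let ?gW = "\<lambda>x. k * (G1 q (x / s) * (1 / s)) * wA"
    let ?gh = "\<lambda>x. k * D powr q * (H1 q (x / s) * (1 / s)) / H q D - q * x powr (q - 1)"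
    have cp: "isCont (\<lambda>x. x powr (q - 1)) x" if "x > 0" for x
      by (rule DERIV_isCont[OF has_real_derivative_powr[OF that]])
    have r1: "(deriv (Wstar q t) \<longlongrightarrow> ?gW (A * s)) (at_right (A * s))"
    proof (rule lim_deriv_right[of _ "A * s + 1"])
      show "deriv (Wstar q t) x = ?gW x" if "x \<in> {A * s<..<A * s + 1}" for x
        using deriv_W_right[OF q t, of x] that unfolding s_def k_def A_def wA_def by simp
      show "isCont ?gW (A * s)"
        by (intro continuous_intros continuous_at_compose[OF _ cG1, unfolded o_def]) (use s in auto)
    qed simp
    have r2: "(deriv (hfun q t) \<longlongrightarrow> ?gh (A * s)) (at_left (A * s))"
    proof (rule lim_deriv_left[of 0])
      show "deriv (hfun q t) x = ?gh x" if "x \<in> {0<..<A * s}" for x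
        using deriv_h_right[OF q t, of x] that AsD unfolding s_def k_def D_def by simp
      show "isCont ?gh (A * s)"
        by (intro continuous_intros continuous_at_compose[OF _ cH1, unfolded o_def] cp As) (use s Ap H_pos[OF q, of D] in auto)
    qed (rule As)
    have e1: "?gW (A * s) = ?gh (A * s)" using KI s by simp
    let ?gW' = "\<lambda>x. k * (G1 q (- x / s) * (- 1 / s)) * wA"
    let ?gh' = "\<lambda>x. k * D powr q * (H1 q (x / s) * (1 / s)) / H q D - q * (- x) powr (q - 1) * (- 1)"
    have l1: "(deriv (Wstar q t) \<longlongrightarrow> ?gW' (- A * s)) (at_left (- A * s))"
    proof (rule lim_deriv_left[of "- A * s - 1"])
      show "deriv (Wstar q t) x = ?gW' x" if "x \<in> {- A * s - 1<..<- A * s}" for x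
        using deriv_W_left[OF q t, of x] that unfolding s_def k_def A_def wA_def by simp
      show "isCont ?gW' (- A * s)"
        by (intro continuous_intros continuous_at_compose[OF _ cG1, unfolded o_def]) (use s in auto)
    qed simp
    have l2: "(deriv (hfun q t) \<longlongrightarrow> ?gh' (- A * s)) (at_right (- A * s))"
    proof (rule lim_deriv_right[of _ 0])
      show "deriv (hfun q t) x = ?gh' x" if "x \<in> {- A * s<..<0}" for x
        using deriv_h_left[OF q t, of x] that AsD unfolding s_def k_def D_def by simp
      show "isCont ?gh' (- A * s)"
        by (intro continuous_intros continuous_at_compose[OF _ cH1, unfolded o_def]
              continuous_at_compose[OF _ cp, unfolded o_def]) (use s As Ap H_pos[OF q, of D] in auto)
    qed (use As in simp)
    have e2: "?gW' (- A * s) = ?gh' (- A * s)"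
    proof -
      have "?gh' (- A * s) = - (k * D powr q * (H1 q A * (1 / s)) / H q D - q * (A * s) powr (q - 1))"
        using s by (simp add: H1m)
      also have "\<dots> = ?gW' (- A * s)" unfolding KI using s by simp
      finally show ?thesis by simp
    qed
    show "(\<exists>L. (deriv (Wstar q t) \<longlongrightarrow> L) (at_right (A * s))
                 \<and> (deriv (hfun q t) \<longlongrightarrow> L) (at_left (A * s)))
          \<and> (\<exists>L. (deriv (Wstar q t) \<longlongrightarrow> L) (at_left (- A * s))
                 \<and> (deriv (hfun q t) \<longlongrightarrow> L) (at_right (- A * s)))"
      using r1 r2 e1 l1 l2 e2 by metis
  qed
  have part2: "A = 0 \<longrightarrow>
            (\<exists>L1 L2. (deriv (Wstar q t) \<longlongrightarrow> L1) (at_right 0)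
                    \<and> (deriv (Wstar q t) \<longlongrightarrow> L2) (at_left 0) \<and> L1 < L2)"
  proof
    assume A: "A = 0"
    let ?gW = "\<lambda>x. k * (G1 q (x / s) * (1 / s)) * wA"
    let ?gW' = "\<lambda>x. k * (G1 q (- x / s) * (- 1 / s)) * wA"
    have r1: "(deriv (Wstar q t) \<longlongrightarrow> ?gW 0) (at_right 0)"
    proof (rule lim_deriv_right[of _ 1])
      show "deriv (Wstar q t) x = ?gW x" if "x \<in> {0<..<1}" for x
        using deriv_W_right[OF q t, of x] that A unfolding s_def k_def A_def wA_def by simp
      show "isCont ?gW 0"
        by (intro continuous_intros continuous_at_compose[OF _ cG1, unfolded o_def]) (use s in auto)
    qed simp
    have l1: "(deriv (Wstar q t) \<longlongrightarrow> ?gW' 0) (at_left 0)"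
    proof (rule lim_deriv_left[of "-1"])
      show "deriv (Wstar q t) x = ?gW' x" if "x \<in> {-1<..<0}" for x
        using deriv_W_left[OF q t, of x] that A unfolding s_def k_def A_def wA_def by simp
      show "isCont ?gW' 0"
        by (intro continuous_intros continuous_at_compose[OF _ cG1, unfolded o_def]) (use s in auto)
    qed simp
    have w0: "wA > 0" unfolding wA_def A using w_0[OF q] .
    have g0: "G1 q 0 < 0" unfolding G1_def using Fq1_pos[OF q] by simp
    have "k * G1 q 0 < 0" using kp g0 by (simp add: mult_pos_neg)
    then have "k * G1 q 0 * wA < 0" using w0 by (simp add: mult_neg_pos)
    then have "k * G1 q 0 * wA / s < 0" using s by (simp add: divide_neg_pos)
    then have "?gW 0 < 0" by simp
    moreover have "?gW' 0 = - ?gW 0" by simp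
    ultimately have "?gW 0 < ?gW' 0" by (smt (verit))
    then show "\<exists>L1 L2. (deriv (Wstar q t) \<longlongrightarrow> L1) (at_right 0)
                    \<and> (deriv (Wstar q t) \<longlongrightarrow> L2) (at_left 0) \<and> L1 < L2"
      using r1 l1 by blast
  qed
  show ?thesis using part1 part2 unfolding A_def s_def by simp
qed


end
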